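(* For integers $k\ge1$, $l\ge0$, $m\ge1$ define \[ \Psi^k_{l,m}(z)=\sum_{0\le p_1<p_2<\dots<p_k}z^{\,l+m(2^{p_1}+2^{p_2}+\dots+2^{p_k})}\in A(D), \] and $\Psi^0_{l,m}(z)=z^l$. Then \[ \mathcal{T}\Psi^k_{l,m}= \begin{cases} \Psi^k_{\frac l2,\frac m2}, & l,m \text{ even},\\[2pt] \Psi^k_{\frac{3l+1}2,\frac{3m}2}, & l \text{ odd},\ m\text{ even},\\[2pt] \Psi^k_{\frac l2,m}+\Psi^{k-1}_{\frac{3(l+m)+1}2,3m}, & l\text{ even},\ m \text{ odd},\\[2pt] \Psi^k_{\frac{3l+1}2,3m}+\Psi^{k-1}_{\frac{l+m}2,m}, & l,m\text{ odd}. \end{cases} \]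
   Context: $T$ is the Collatz map $T(n)=\frac{3n+1}2$ ($n$ odd), $T(n)=\frac n2$ ($n$ even). $D$ is the open unit disk and $A(D)$ the holomorphic functions on $D$. The operator $\mathcal{T}$ acts on $A(D)$ by $\mathcal{T}\big(\sum_{n\ge0}a_nz^n\big)=\sum_{n\ge0}a_nz^{T(n)}$, i.e. $\mathcal{T}z^n=z^{T(n)}$. Thus $\Psi^k_{l,m}$ is the generating function of $\{l+mN: N$ a nonnegative integer with exactly $k$ ones in its binary expansion$\}$. *)

theory Defs
  imports "HOL-Analysis.Analysis"
begin

definition collatzT :: "nat \<Rightarrow> nat" where
  "collatzT n = (if odd n then (3 * n + 1) div 2 else n div 2)"

definition Top :: "(complex \<Rightarrow> complex) \<Rightarrow> complex \<Rightarrow> complex" where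
  "Top f z = (\<Sum>n. ((deriv ^^ n) f 0 / fact n) * z ^ collatzT n)"

text \<open>Psi^k_{l,m}(z) = sum over 0 <= p_1 < ... < p_k of z^(l + m (2^p_1 + ... + 2^p_k)),
  i.e. summed over the finite sets P of exponents with card P = k; Psi^0_{l,m}(z) = z^l.\<close>
definition Psi :: "nat \<Rightarrow> nat \<Rightarrow> nat \<Rightarrow> complex \<Rightarrow> complex" where
  "Psi k l m z = (if k = 0 then z ^ l
     else (\<Sum>\<^sub>\<infinity>P\<in>{P :: nat set. finite P \<and> card P = k}. z ^ (l + m * (\<Sum>p\<in>P. 2 ^ p))))"

end

theory Submission imports Defs "HOL-Library.Nat_Bijection" begin

lemma cT1: "collatzT (2*a + 2*b*N) = a + b*N"
  unfolding collatzT_def by simp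
lemma cT2: "collatzT (Suc (2*a) + 2*b*N) = (3*Suc (2*a)+1) div 2 + (3*(2*b) div 2)*N"
proof -
  have "Suc (2*a) + 2*b*N = 2*(a+b*N) + 1" by simp
  then show ?thesis unfolding collatzT_def by (simp add: algebra_simps)
qed
lemma cT3: "collatzT (2*a + Suc (2*b)*(2*N)) = a + Suc(2*b)*N"
proof -
  have "2*a + Suc (2*b)*(2*N) = 2*(a + Suc(2*b)*N)" by (simp add: algebra_simps)
  then show ?thesis unfolding collatzT_def by simp
qed
lemma cT4: "collatzT (2*a + Suc (2*b)*(Suc (2*N))) = (3*(2*a+Suc (2*b))+1) div 2 + 3*Suc(2*b)*N"
proof -
  have "2*a + Suc (2*b)*(Suc (2*N)) = 2*(a+b + Suc(2*b)*N) + 1" by (simp add: algebra_simps)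
  moreover have "3*(2*a+Suc (2*b))+1 = 2*(3*a+3*b+2)" by simp
  ultimately show ?thesis unfolding collatzT_def by (simp add: algebra_simps)
qed
lemma cT5: "collatzT (Suc (2*a) + Suc (2*b)*(2*N)) = (3*Suc (2*a)+1) div 2 + 3*Suc(2*b)*N"
proof -
  have "Suc (2*a) + Suc (2*b)*(2*N) = 2*(a + Suc(2*b)*N) + 1" by (simp add: algebra_simps)
  then show ?thesis unfolding collatzT_def by (simp add: algebra_simps)
qed
lemma cT6: "collatzT (Suc (2*a) + Suc (2*b)*(Suc (2*N))) = (Suc (2*a) + Suc (2*b)) div 2 + Suc(2*b)*N"
proof -
  have "Suc (2*a) + Suc (2*b)*(Suc (2*N)) = 2*(a+b+1 + Suc(2*b)*N)" by (simp add: algebra_simps)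
  then show ?thesis unfolding collatzT_def by (simp add: algebra_simps)
qed

lemma sd_even: "set_decode (2*N) = Suc ` set_decode N"
proof (rule set_eqI)
  fix q show "q \<in> set_decode (2*N) \<longleftrightarrow> q \<in> Suc ` set_decode N"
    by (cases q) auto
qed
lemma sd_odd: "set_decode (Suc (2*N)) = insert 0 (Suc ` set_decode N)"
proof (rule set_eqI)
  fix q show "q \<in> set_decode (Suc (2*N)) \<longleftrightarrow> q \<in> insert 0 (Suc ` set_decode N)"
    by (cases q) auto
qed
lemma card_even: "card (set_decode (2*N)) = card (set_decode N)"
  by (simp add: sd_even card_image)
lemma card_odd: "card (set_decode (Suc (2*N))) = Suc (card (set_decode N))"
  by (simp add: sd_odd card_image card_insert_if)


definition CC :: "nat \<Rightarrow> nat set" where "CC k = {N. card (set_decode N) = k}"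
definition Phi :: "nat \<Rightarrow> nat \<Rightarrow> nat \<Rightarrow> complex \<Rightarrow> complex" where
  "Phi k l m z = infsum (\<lambda>N. z ^ (l + m*N)) (CC k)"

lemma CC0: "CC 0 = {0}"
proof -
  have "card (set_decode N) = 0 \<longleftrightarrow> N = 0" for N
    by (metis card_0_eq finite_set_decode set_decode_inverse set_decode_zero set_encode_empty)
  then show ?thesis by (auto simp: CC_def)
qed

lemma psi_eq: "Psi k l m z = Phi k l m z"
proof (cases "k = 0")
  case True then show ?thesis by (simp add: Psi_def Phi_def CC0)
next
  case False
  have inj: "inj_on set_decode (CC k)"
    by (metis inj_on_inverseI set_decode_inverse)
  have img: "{P :: nat set. finite P \<and> card P = k} = set_decode ` CC k"
  proof (rule set_eqI, rule iffI)
    fix P assume "P \<in> {P :: nat set. finite P \<and> card P = k}"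
    then show "P \<in> set_decode ` CC k"
      by (intro image_eqI[of _ _ "set_encode P"]) (auto simp: CC_def)
  qed (auto simp: CC_def)
  have "Psi k l m z = infsum (\<lambda>P. z ^ (l + m * set_encode P)) (set_decode ` CC k)"
    using False by (simp add: Psi_def img set_encode_def)
  also have "\<dots> = Phi k l m z"
    by (subst infsum_reindex[OF inj]) (simp add: Phi_def o_def)
  finally show ?thesis .
qed

lemma geom_summable_on: "norm (z::complex) < 1 \<Longrightarrow> (\<lambda>n. z ^ n) summable_on UNIV"
proof -
  assume z: "norm z < 1"
  have "summable (\<lambda>n. norm (z ^ n))" using z by (simp add: norm_power summable_geometric)
  then show ?thesis
    using norm_summable_imp_has_sum summable_def summable_on_def
    by (metis summable_norm_cancel)
qed

lemma summ_inj: "norm (z::complex) < 1 \<Longrightarrow> inj_on h A \<Longrightarrow> (\<lambda>N. z ^ (h N)) summable_on A"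
proof -
  assume z: "norm z < 1" and inj: "inj_on h A"
  have "(\<lambda>n. z ^ n) summable_on (h ` A)"
    using geom_summable_on[OF z] by (rule summable_on_subset_banach) auto
  then show ?thesis using summable_on_reindex[OF inj, of "\<lambda>n. z ^ n"] by (simp add: o_def)
qed

lemma phi_has_sum: "m \<ge> 1 \<Longrightarrow> norm z < 1 \<Longrightarrow> ((\<lambda>N. z ^ (l + m*N)) has_sum Phi k l m z) (CC k)"
  unfolding Phi_def
  by (rule has_sum_infsum, rule summ_inj) (auto simp: inj_on_def)

lemma CC_split: "k \<ge> 1 \<Longrightarrow> CC k = (\<lambda>N. 2*N) ` CC k \<union> (\<lambda>N. Suc (2*N)) ` CC (k-1)"
proof (rule set_eqI, rule iffI)
  fix N assume k: "k \<ge> 1" and N: "N \<in> CC k"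
  show "N \<in> (\<lambda>N. 2*N) ` CC k \<union> (\<lambda>N. Suc (2*N)) ` CC (k-1)"
  proof (cases "even N")
    case True
    define M where "M = N div 2"
    have "N = 2*M" using True by (simp add: M_def)
    then show ?thesis using N by (auto simp: CC_def card_even)
  next
    case False
    define M where "M = N div 2"
    have "N = Suc (2*M)" using False unfolding M_def by presburger
    then show ?thesis using N by (auto simp: CC_def card_odd)
  qed
qed (auto simp: CC_def card_even card_odd)

lemma has_sum_split:
  fixes g :: "nat \<Rightarrow> complex"
  assumes k: "k \<ge> 1"
    and a: "((\<lambda>N. g (2*N)) has_sum a) (CC k)"
    and b: "((\<lambda>N. g (Suc (2*N))) has_sum b) (CC (k-1))"
  shows "(g has_sum (a + b)) (CC k)"
proof -
  have i1: "inj_on (\<lambda>N::nat. 2*N) X" for X by (auto simp: inj_on_def)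
  have i2: "inj_on (\<lambda>N::nat. Suc (2*N)) X" for X by (auto simp: inj_on_def)
  have ne: "2*x \<noteq> Suc (2*y)" for x y :: nat by presburger
  have "(g has_sum a) ((\<lambda>N. 2*N) ` CC k)" using a by (simp add: has_sum_reindex[OF i1] o_def)
  moreover have "(g has_sum b) ((\<lambda>N. Suc (2*N)) ` CC (k-1))" using b by (simp add: has_sum_reindex[OF i2] o_def)
  moreover have "(\<lambda>N. 2*N) ` CC k \<inter> (\<lambda>N. Suc (2*N)) ` CC (k-1) = {}" using ne by blast
  ultimately have "(g has_sum (a+b)) ((\<lambda>N. 2*N) ` CC k \<union> (\<lambda>N. Suc (2*N)) ` CC (k-1))"
    by (rule has_sum_Un_disjoint)
  then show ?thesis using CC_split[OF k] by simp
qed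


lemma ind_has_sum:
  fixes z :: complex
  assumes "summable (\<lambda>n. norm z ^ h n)"
  shows "((\<lambda>n. z ^ (h n)) has_sum (\<Sum>n. of_bool (n \<in> S) * z ^ (h n))) S"
proof -
  define f where "f n = of_bool (n \<in> S) * z ^ (h n)" for n
  have ns: "summable (\<lambda>n. norm (f n))"
    by (rule summable_comparison_test[OF _ assms]) (auto simp: f_def norm_power)
  then have "f sums (suminf f)" using summable_norm_cancel summable_sums by blast
  then have "(f has_sum (suminf f)) UNIV" using norm_summable_imp_has_sum ns by blast
  then have "((\<lambda>n. z ^ (h n)) has_sum (suminf f)) S"
    by (subst (asm) has_sum_cong_neutral[where g = "\<lambda>n. z ^ (h n)" and T = S]) (auto simp: f_def)
  then show ?thesis by (simp add: f_def[abs_def])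
qed

lemma collatz_ge: "collatzT n \<ge> n div 2"
  unfolding collatzT_def by (auto intro: div_le_mono)

lemma summable_collatz:
  assumes z: "norm (z::complex) < 1"
  shows "summable (\<lambda>n. norm z ^ collatzT n)"
proof -
  define r where "r = norm z"
  define \<rho> where "\<rho> = sqrt r"
  have r0: "0 \<le> r" "r < 1" using z by (auto simp: r_def)
  have \<rho>0: "0 \<le> \<rho>" "\<rho> < 1" using r0 by (auto simp: \<rho>_def)
  have \<rho>2: "\<rho>^2 = r" using r0 by (simp add: \<rho>_def)
  have "summable (\<lambda>n. \<rho> ^ n)" using \<rho>0 by (simp add: summable_geometric)
  then have s1: "summable (\<lambda>n. \<rho> ^ (n - 1))"
    using summable_Suc_iff[of "\<lambda>n. \<rho> ^ (n - 1)"] by simp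
  have bound: "r ^ collatzT n \<le> \<rho> ^ (n - 1)" for n
  proof -
    have "r ^ collatzT n \<le> r ^ (n div 2)"
      using r0 collatz_ge by (intro power_decreasing) auto
    also have "\<dots> = \<rho> ^ (2 * (n div 2))" by (simp add: power_mult \<rho>2)
    also have "\<dots> \<le> \<rho> ^ (n - 1)"
      using \<rho>0 by (intro power_decreasing) auto
    finally show ?thesis .
  qed
  show ?thesis
    by (rule summable_comparison_test[OF _ s1]) (use bound r0 in \<open>auto simp: r_def\<close>)
qed

lemma top_has_sum:
  assumes m: "m \<ge> 1" and z: "norm z < 1"
  shows "((\<lambda>N. z ^ (collatzT (l + m*N))) has_sum Top (Psi k l m) z) (CC k)"
proof -
  define S where "S = (\<lambda>N. l + m*N) ` CC k"
  have inj: "inj_on (\<lambda>N. l + m*N) (CC k)" using m by (auto simp: inj_on_def)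
  define a where "a n = (of_bool (n \<in> S) :: complex)" for n
  define F where "F = Abs_fps a"
  have PsiS: "Psi k l m w = infsum (\<lambda>n. w ^ n) S" for w
    unfolding psi_eq Phi_def S_def by (subst infsum_reindex[OF inj]) (simp add: o_def)
  have geo: "norm w < 1 \<Longrightarrow> summable (\<lambda>n. norm w ^ n)" for w :: complex
    by (simp add: summable_geometric)
  have ev: "eval_fps F w = Psi k l m w" if "norm w < 1" for w
  proof -
    have "((\<lambda>n. w ^ n) has_sum (\<Sum>n. a n * w ^ n)) S"
      using ind_has_sum[of w "\<lambda>n. n" S] geo[OF that] by (simp add: a_def)
    then show ?thesis unfolding PsiS eval_fps_def F_def by (simp add: infsumI)
  qed
  have "conv_radius a \<ge> 1"
  proof (rule conv_radius_geI_ex')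
    fix r :: real assume "0 < r" "ereal r < 1"
    then have r: "0 < r" "r < 1" by auto
    show "summable (\<lambda>n. a n * of_real r ^ n)"
      by (rule summable_norm_cancel, rule summable_comparison_test[OF _ geo[of "of_real r"]])
         (use r in \<open>auto simp: a_def norm_power\<close>)
  qed
  then have rad: "fps_conv_radius F > 0" unfolding fps_conv_radius_def F_def
    by simp (erule less_le_trans[rotated], simp)
  have "eventually (\<lambda>w. w \<in> ball 0 1) (nhds (0::complex))"
    by (rule eventually_nhds_in_open) auto
  then have "eventually (\<lambda>w. eval_fps F w = Psi k l m w) (nhds 0)"
    by (rule eventually_mono) (auto intro: ev)
  then have exp: "Psi k l m has_fps_expansion F" using rad by (simp add: has_fps_expansion_def)
  have coef: "(deriv ^^ n) (Psi k l m) 0 / fact n = a n" for n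
    using fps_nth_fps_expansion[OF exp, of n] by (simp add: F_def)
  have "Top (Psi k l m) z = (\<Sum>n. a n * z ^ collatzT n)"
    unfolding Top_def coef ..
  moreover have "((\<lambda>n. z ^ (collatzT n)) has_sum (\<Sum>n. a n * z ^ collatzT n)) S"
    using ind_has_sum[of z collatzT S] summable_collatz[OF z] by (simp add: a_def)
  ultimately have "((\<lambda>n. z ^ (collatzT n)) has_sum Top (Psi k l m) z) S" by simp
  then show ?thesis unfolding S_def by (simp add: has_sum_reindex[OF inj] o_def)
qed


theorem mainTheorem14:
  fixes k l m :: nat and z :: complex
  assumes "k \<ge> 1" and "m \<ge> 1" and "z \<in> ball 0 1"
  shows "Top (Psi k l m) z =
    (if even l \<and> even m then Psi k (l div 2) (m div 2) z
     else if odd l \<and> even m then Psi k ((3 * l + 1) div 2) ((3 * m) div 2) z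
     else if even l \<and> odd m then Psi k (l div 2) m z + Psi (k - 1) ((3 * (l + m) + 1) div 2) (3 * m) z
     else Psi k ((3 * l + 1) div 2) (3 * m) z + Psi (k - 1) ((l + m) div 2) m z)"
proof -
  have z: "norm z < 1" using assms(3) by simp
  have k: "k \<ge> 1" and m: "m \<ge> 1" using assms by auto
  define g where "g N = z ^ (collatzT (l + m*N))" for N
  have top: "(g has_sum Top (Psi k l m) z) (CC k)"
    unfolding g_def by (rule top_has_sum[OF m z])
  obtain a where a: "l = 2*a \<or> l = Suc (2*a)" by (metis oddE evenE Suc_eq_plus1)
  obtain b where b: "m = 2*b \<or> m = Suc (2*b)" by (metis oddE evenE Suc_eq_plus1)
  show ?thesis
  proof (cases "even l")
    case le: True
    then have l: "l = 2*a" using a by auto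
    show ?thesis
    proof (cases "even m")
      case me: True
      then have mm: "m = 2*b" using b by auto
      then have b1: "b \<ge> 1" using m by simp
      have "(g has_sum Phi k a b z) (CC k)"
        using phi_has_sum[OF b1 z, of a k] unfolding g_def l mm cT1 .
      then have "Top (Psi k l m) z = Psi k (l div 2) (m div 2) z"
        using top has_sum_unique by (simp add: psi_eq l mm)
      then show ?thesis using le me by simp
    next
      case mo: False
      then have mm: "m = Suc (2*b)" using b by auto
      have h1: "((\<lambda>N. g (2*N)) has_sum Phi k a m z) (CC k)"
        using phi_has_sum[OF m z, of a k] unfolding g_def l mm cT3 .
      have m3: "3*m \<ge> 1" using m by simp
      have h2: "((\<lambda>N. g (Suc (2*N))) has_sum Phi (k-1) ((3 * (l + m) + 1) div 2) (3*m) z) (CC (k-1))"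
        using phi_has_sum[OF m3 z, of "(3 * (l + m) + 1) div 2" "k-1"] unfolding g_def l mm cT4
        by (simp add: algebra_simps)
      have "Top (Psi k l m) z = Psi k (l div 2) m z + Psi (k - 1) ((3 * (l + m) + 1) div 2) (3 * m) z"
        using has_sum_unique[OF top has_sum_split[OF k h1 h2]] by (simp add: psi_eq l)
      then show ?thesis using le mo by simp
    qed
  next
    case lo: False
    then have l: "l = Suc (2*a)" using a by auto
    show ?thesis
    proof (cases "even m")
      case me: True
      then have mm: "m = 2*b" using b by auto
      have m3: "3*m div 2 \<ge> 1" using m mm by simp
      have "(g has_sum Phi k ((3 * l + 1) div 2) ((3 * m) div 2) z) (CC k)"
        using phi_has_sum[OF m3 z, of "(3 * l + 1) div 2" k] unfolding g_def l mm cT2 .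
      then have "Top (Psi k l m) z = Psi k ((3 * l + 1) div 2) ((3 * m) div 2) z"
        using top has_sum_unique by (simp add: psi_eq)
      then show ?thesis using lo me by simp
    next
      case mo: False
      then have mm: "m = Suc (2*b)" using b by auto
      have m3: "3*m \<ge> 1" using m by simp
      have h1: "((\<lambda>N. g (2*N)) has_sum Phi k ((3 * l + 1) div 2) (3*m) z) (CC k)"
        using phi_has_sum[OF m3 z, of "(3 * l + 1) div 2" k] unfolding g_def l mm cT5
        by (simp add: algebra_simps)
      have h2: "((\<lambda>N. g (Suc (2*N))) has_sum Phi (k-1) ((l + m) div 2) m z) (CC (k-1))"
        using phi_has_sum[OF m z, of "(l + m) div 2" "k-1"] unfolding g_def l mm cT6
        by (simp add: algebra_simps)
      have "Top (Psi k l m) z = Psi k ((3 * l + 1) div 2) (3 * m) z + Psi (k - 1) ((l + m) div 2) m z"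
        using has_sum_unique[OF top has_sum_split[OF k h1 h2]] by (simp add: psi_eq)
      then show ?thesis using lo mo by simp
    qed
  qed
qed

end
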